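(* Let $k\leq m$ be natural numbers, $0<\alpha<1$, and let $U_{(1)}\leq\dots\leq U_{(m)}$ be the order statistics of $m$ i.i.d. $\mathrm{Unif}([0,1])$ random variables. Then with probability at least $1-\tilde{\mathcal{O}}_k\Big(\frac{1}{k}+\frac{1}{k^{(1-\alpha)/\alpha}}\Big)$, \[ \sum_{i=1}^{k}\frac{1}{U_{(i)}^{\alpha}}\leq\frac{2\cdot3^\alpha}{1-\alpha}\cdot m^{\alpha}k^{1-\alpha}. \]
   Context: $\tilde{\mathcal{O}}_k$ hides constants independent of $k$ and $m$ and logarithmic factors in $k$. *)

theory Defs
  imports "HOL-Probability.Probability"
begin

definition unif01 :: "real measure" where
  "unif01 = uniform_measure lborel {0..1}"

definition iid_unif :: "nat \<Rightarrow> (nat \<Rightarrow> real) measure" where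
  "iid_unif m = PiM {..<m} (\<lambda>_. unif01)"

definition order_stat :: "nat \<Rightarrow> (nat \<Rightarrow> real) \<Rightarrow> nat \<Rightarrow> real" where
  "order_stat m x i = sort (map x [0..<m]) ! (i - 1)"

end

theory Submission
  imports Defs
begin

lemma unif01_density: "unif01 = density lborel (\<lambda>x. ennreal (indicator {0..1::real} x))"
  unfolding unif01_def uniform_measure_def
  by (simp add: ennreal_indicator divide_ennreal_def)

lemma prob_unif01: "prob_space unif01"
  unfolding unif01_def by (rule prob_space_uniform_measure) auto

lemma sets_unif01[simp, measurable_cong]: "sets unif01 = sets borel"
  unfolding unif01_def by simp

lemma space_unif01[simp]: "space unif01 = UNIV"
  unfolding unif01_def by simp

lemma prob_iid: "prob_space (iid_unif m)"
  unfolding iid_unif_def by (rule prob_space_PiM) (rule prob_unif01)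

lemma integral_unif01:
  fixes f :: "real \<Rightarrow> real"
  assumes [measurable]: "f \<in> borel_measurable borel"
  shows "integral\<^sup>L unif01 f = integral\<^sup>L lborel (\<lambda>x. indicator {0..1} x * f x)"
  unfolding unif01_density
  by (subst integral_density) auto

lemma iid_prod:
  fixes f :: "real \<Rightarrow> real"
  assumes "S \<subseteq> {..<m}" "integrable unif01 f"
  shows "integral\<^sup>L (iid_unif m) (\<lambda>x. \<Prod>i\<in>S. f (x i)) = (integral\<^sup>L unif01 f) ^ card S"
proof -
  interpret product_sigma_finite "\<lambda>_. unif01"
    unfolding product_sigma_finite_def
    using prob_unif01 prob_space_imp_sigma_finite by blast
  let ?g = "\<lambda>i. if i \<in> S then f else (\<lambda>_. 1::real)"
  have fin: "finite {..<m}" by simp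
  have int: "\<And>i. i \<in> {..<m} \<Longrightarrow> integrable unif01 (?g i)"
    using assms(2) finite_measure.integrable_const[OF prob_space.finite_measure[OF prob_unif01]] by auto
  have "integral\<^sup>L (iid_unif m) (\<lambda>x. \<Prod>i\<in>{..<m}. ?g i (x i)) = (\<Prod>i\<in>{..<m}. integral\<^sup>L unif01 (?g i))"
    unfolding iid_unif_def by (rule product_integral_prod[OF fin int])
  moreover have "\<And>x. (\<Prod>i\<in>{..<m}. ?g i (x i)) = (\<Prod>i\<in>S. f (x i))"
  proof -
    fix x
    have "(\<Prod>i\<in>{..<m}. ?g i (x i)) = (\<Prod>i\<in>{..<m}. if i \<in> S then f (x i) else 1)"
      by (intro prod.cong) auto
    also have "\<dots> = (\<Prod>i\<in>{..<m} \<inter> S. f (x i))"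
      by (simp add: prod.inter_restrict)
    also have "{..<m} \<inter> S = S" using assms(1) by auto
    finally show "(\<Prod>i\<in>{..<m}. ?g i (x i)) = (\<Prod>i\<in>S. f (x i))" .
  qed
  moreover have "(\<Prod>i\<in>{..<m}. integral\<^sup>L unif01 (?g i)) = (\<Prod>i\<in>{..<m}. if i \<in> S then integral\<^sup>L unif01 f else 1)"
    using prob_space.prob_space[OF prob_unif01] by (intro prod.cong) auto
  moreover have "\<dots> = (\<Prod>i\<in>{..<m} \<inter> S. integral\<^sup>L unif01 f)"
    by (rule prod.inter_restrict[symmetric]) simp
  moreover have "{..<m} \<inter> S = S" using assms(1) by auto
  ultimately show ?thesis by simp
qed

lemma unif01_FTC:
  fixes f F :: "real \<Rightarrow> real"
  assumes rs: "0 \<le> r" "r \<le> s" "s \<le> 1"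
    and der: "\<And>x. x \<in> {r..s} \<Longrightarrow> (F has_real_derivative f x) (at x)"
    and cont: "continuous_on {r..s} f"
  shows "integral\<^sup>L unif01 (\<lambda>x. indicator {r..s} x * f x) = F s - F r"
    and "(\<lambda>x. indicator {r..s} x * f x) \<in> borel_measurable borel"
proof -
  have intl: "integrable lborel (\<lambda>x. indicator {r..s} x *\<^sub>R f x)"
    by (rule borel_integrable_compact) (auto intro: cont)
  then have meas: "(\<lambda>x. indicator {r..s} x * f x) \<in> borel_measurable borel"
    using borel_measurable_integrable by fastforce
  then show "(\<lambda>x. indicator {r..s} x * f x) \<in> borel_measurable borel" .
  have "integral\<^sup>L unif01 (\<lambda>x. indicator {r..s} x * f x)
      = integral\<^sup>L lborel (\<lambda>x. indicator {0..1} x * (indicator {r..s} x * f x))"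
    by (rule integral_unif01[OF meas])
  also have "\<dots> = integral\<^sup>L lborel (\<lambda>x. indicator {r..s} x *\<^sub>R f x)"
    using rs by (intro Bochner_Integration.integral_cong) (auto simp: indicator_def)
  also have "\<dots> = (LINT x : {r..s} | lborel. f x)"
    by (simp add: set_lebesgue_integral_def)
  also have "\<dots> = integral {r..s} f"
    by (rule set_borel_integral_eq_integral(2)) (use intl in \<open>simp add: set_integrable_def\<close>)
  also have "\<dots> = F s - F r"
  proof (rule integral_unique, rule fundamental_theorem_of_calculus[OF rs(2)])
    fix x assume "x \<in> {r..s}"
    then show "(F has_vector_derivative f x) (at x within {r..s})"
      using der has_real_derivative_iff_has_vector_derivative has_field_derivative_at_within by blast
  qed
  finally show "integral\<^sup>L unif01 (\<lambda>x. indicator {r..s} x * f x) = F s - F r" .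
qed

lemma sorted_nth_le_iff:
  fixes ys :: "real list"
  assumes "sorted ys" "i < length ys"
  shows "ys ! i \<le> t \<longleftrightarrow> Suc i \<le> card {j. j < length ys \<and> ys ! j \<le> t}"
proof
  assume h: "ys ! i \<le> t"
  have "{..i} \<subseteq> {j. j < length ys \<and> ys ! j \<le> t}"
  proof
    fix j assume "j \<in> {..i}"
    then have "j \<le> i" by simp
    then have "ys ! j \<le> ys ! i" using assms sorted_nth_mono by blast
    then show "j \<in> {j. j < length ys \<and> ys ! j \<le> t}" using h \<open>j \<le> i\<close> assms(2) by auto
  qed
  then have "card {..i} \<le> card {j. j < length ys \<and> ys ! j \<le> t}"
    by (intro card_mono) auto
  then show "Suc i \<le> card {j. j < length ys \<and> ys ! j \<le> t}" by simp
next
  assume h: "Suc i \<le> card {j. j < length ys \<and> ys ! j \<le> t}"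
  show "ys ! i \<le> t"
  proof (rule ccontr)
    assume "\<not> ys ! i \<le> t"
    have "{j. j < length ys \<and> ys ! j \<le> t} \<subseteq> {..<i}"
    proof
      fix j assume j: "j \<in> {j. j < length ys \<and> ys ! j \<le> t}"
      show "j \<in> {..<i}"
      proof (rule ccontr)
        assume "j \<notin> {..<i}"
        then have "i \<le> j" by simp
        then have "ys ! i \<le> ys ! j" using assms j sorted_nth_mono by blast
        then show False using j \<open>\<not> ys ! i \<le> t\<close> by auto
      qed
    qed
    then have "card {j. j < length ys \<and> ys ! j \<le> t} \<le> i"
      by (metis card_lessThan card_mono finite_lessThan)
    then show False using h by simp
  qed
qed

lemma order_stat_le_iff:
  assumes "1 \<le> i" "i \<le> m"
  shows "order_stat m x i \<le> t \<longleftrightarrow> real i \<le> (\<Sum>j<m. indicator {..t} (x j))"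
proof -
  let ?xs = "map x [0..<m]"
  have len: "length (sort ?xs) = m" by simp
  have A: "order_stat m x i \<le> t \<longleftrightarrow> Suc (i - 1) \<le> card {j. j < length (sort ?xs) \<and> sort ?xs ! j \<le> t}"
    unfolding order_stat_def using assms by (intro sorted_nth_le_iff) auto
  have B: "card {j. j < length (sort ?xs) \<and> sort ?xs ! j \<le> t} = length (filter (\<lambda>y. y \<le> t) (sort ?xs))"
    by (simp add: length_filter_conv_card)
  have C: "length (filter (\<lambda>y. y \<le> t) (sort ?xs)) = length (filter (\<lambda>y. y \<le> t) ?xs)"
    by (metis filter_sort length_sort)
  have D: "length (filter (\<lambda>y. y \<le> t) ?xs) = card {j. j < m \<and> x j \<le> t}"
    by (simp add: length_filter_conv_card cong: conj_cong)
  have E: "(\<Sum>j<m. indicator {..t} (x j) :: real) = real (card {j. j < m \<and> x j \<le> t})"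
  proof -
    have "(\<Sum>j<m. indicator {..t} (x j) :: real) = (\<Sum>j\<in>{..<m}. if x j \<le> t then 1 else 0)"
      by (intro sum.cong) (auto simp: indicator_def)
    also have "\<dots> = real (card ({..<m} \<inter> {j. x j \<le> t}))"
      by (simp add: sum.If_cases)
    also have "{..<m} \<inter> {j. x j \<le> t} = {j. j < m \<and> x j \<le> t}" by auto
    finally show ?thesis .
  qed
  have F: "Suc (i - 1) = i" using assms by simp
  have "order_stat m x i \<le> t \<longleftrightarrow> i \<le> card {j. j < m \<and> x j \<le> t}"
    using A B C D F by simp
  also have "\<dots> \<longleftrightarrow> real i \<le> real (card {j. j < m \<and> x j \<le> t})"
    by (rule of_nat_le_iff[symmetric])
  finally show ?thesis using E by simp
qed

lemma order_stat_measurable: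
  assumes "1 \<le> i" "i \<le> m"
  shows "(\<lambda>x. order_stat m x i) \<in> borel_measurable (iid_unif m)"
proof (rule borel_measurableI_le)
  fix t
  have "{x \<in> space (iid_unif m). order_stat m x i \<le> t}
      = {x \<in> space (iid_unif m). real i \<le> (\<Sum>j<m. indicator {..t} (x j))}"
    using order_stat_le_iff[OF assms] by auto
  also have "\<dots> \<in> sets (iid_unif m)"
    unfolding iid_unif_def by measurable
  finally show "{x \<in> space (iid_unif m). order_stat m x i \<le> t} \<in> sets (iid_unif m)" .
qed

lemma deterministic_bound:
  fixes x :: "nat \<Rightarrow> real" and \<alpha> s :: real
  assumes "k \<le> m" "0 < s" "0 \<le> \<alpha>"
  shows "(\<Sum>i=1..k. 1 / (order_stat m x i) powr \<alpha>)
    \<le> (\<Sum>j<m. (if x j \<le> s then 1 / x j powr \<alpha> else 0)) + real k * (1 / s powr \<alpha>)"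
proof -
  let ?xs = "map x [0..<m]"
  let ?ys = "sort ?xs"
  define h where "h y = (if y \<le> s then 1 / y powr \<alpha> else 0)" for y :: real
  have h0: "0 \<le> h y" for y unfolding h_def by auto
  have pt: "1 / y powr \<alpha> \<le> h y + 1 / s powr \<alpha>" for y
  proof (cases "y \<le> s")
    case True then show ?thesis unfolding h_def by simp
  next
    case False
    then have "s powr \<alpha> \<le> y powr \<alpha>" using assms(2,3) by (intro powr_mono2) auto
    then show ?thesis using False assms(2) unfolding h_def
      by (simp add: frac_le)
  qed
  have "(\<Sum>i=1..k. 1 / (order_stat m x i) powr \<alpha>) = (\<Sum>i<k. 1 / (?ys ! i) powr \<alpha>)"
  proof -
    have "(\<Sum>i<k. 1 / (?ys ! i) powr \<alpha>) = (\<Sum>i\<in>Suc ` {..<k}. 1 / (?ys ! (i - 1)) powr \<alpha>)"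
      by (subst sum.reindex) auto
    also have "Suc ` {..<k} = {1..k}" by (rule image_Suc_lessThan)
    finally show ?thesis unfolding order_stat_def by simp
  qed
  also have "\<dots> \<le> (\<Sum>i<k. h (?ys ! i) + 1 / s powr \<alpha>)"
    by (intro sum_mono pt)
  also have "\<dots> = (\<Sum>i<k. h (?ys ! i)) + real k * (1 / s powr \<alpha>)"
    by (simp add: sum.distrib)
  also have "(\<Sum>i<k. h (?ys ! i)) \<le> (\<Sum>i<m. h (?ys ! i))"
    using assms(1) by (intro sum_mono2) (auto simp: h0)
  also have "(\<Sum>i<m. h (?ys ! i)) = sum_list (map h ?ys)"
    by (simp add: sum_list_sum_nth atLeast0LessThan)
  also have "\<dots> = sum_list (map h ?xs)"
    by (metis mset_map mset_sort sum_mset_sum_list)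
  also have "\<dots> = (\<Sum>j<m. h (x j))"
    by (simp add: sum_list_sum_nth atLeast0LessThan)
  finally show ?thesis unfolding h_def by simp
qed

lemma unif_int:
  fixes f :: "real \<Rightarrow> real"
  assumes "f \<in> borel_measurable borel" "\<And>y. \<bar>f y\<bar> \<le> B"
  shows "integrable unif01 f"
  by (rule finite_measure.integrable_const_bound[OF prob_space.finite_measure[OF prob_unif01], of _ B])
     (use assms in auto)

lemma iid_comp_meas:
  fixes f :: "real \<Rightarrow> real"
  assumes "j < m" "f \<in> borel_measurable borel"
  shows "(\<lambda>x. f (x j)) \<in> borel_measurable (iid_unif m)"
proof -
  have f: "f \<in> borel_measurable unif01"
    using assms(2) measurable_cong_sets[OF sets_unif01 refl] by blast
  show ?thesis unfolding iid_unif_def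
    by (rule measurable_compose[OF measurable_component_singleton[of j "{..<m}" "\<lambda>_. unif01"] f]) (use assms in simp)
qed

lemma iid_coord:
  fixes f :: "real \<Rightarrow> real"
  assumes "j < m" "integrable unif01 f"
  shows "integral\<^sup>L (iid_unif m) (\<lambda>x. f (x j)) = integral\<^sup>L unif01 f"
  using iid_prod[of "{j}" m f] assms by simp

lemma iid_pair:
  fixes f :: "real \<Rightarrow> real"
  assumes "j < m" "l < m" "j \<noteq> l" "integrable unif01 f"
  shows "integral\<^sup>L (iid_unif m) (\<lambda>x. f (x j) * f (x l)) = (integral\<^sup>L unif01 f)^2"
  using iid_prod[of "{j,l}" m f] assms by (simp add: power2_eq_square)

lemma unif_lt:
  assumes "0 \<le> r" "r \<le> 1"
  shows "measure unif01 {..<r} = r"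
proof -
  have "measure unif01 {..<r} = measure lborel ({0..1} \<inter> {..<r}) / measure lborel {0..1::real}"
    unfolding unif01_def by (subst measure_uniform_measure) auto
  also have "{0..1} \<inter> {..<r} = {0..<r}" using assms by auto
  also have "measure lborel {0..<r} = r" using assms by (simp add: measure_def)
  finally show ?thesis by simp
qed

lemma iid_coord_lt:
  assumes "j < m" "0 \<le> r" "r \<le> 1"
  shows "measure (iid_unif m) {x \<in> space (iid_unif m). x j < r} = r"
proof -
  interpret P: prob_space "iid_unif m" by (rule prob_iid)
  have "measure (iid_unif m) {x \<in> space (iid_unif m). x j < r}
      = integral\<^sup>L (iid_unif m) (indicator {x \<in> space (iid_unif m). x j < r})"
    by (simp add: Int_absorb2 subset_iff)
  also have "\<dots> = integral\<^sup>L (iid_unif m) (\<lambda>x. indicator {..<r} (x j))"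
    by (intro Bochner_Integration.integral_cong) (auto simp: indicator_def)
  also have "\<dots> = integral\<^sup>L unif01 (indicator {..<r})"
    by (rule iid_coord[OF assms(1)], rule unif_int[of _ 1]) (auto simp: indicator_def)
  also have "\<dots> = r" using unif_lt[OF assms(2,3)] by simp
  finally show ?thesis .
qed

theorem lemma10:
  fixes \<alpha> :: real
  assumes "0 < \<alpha>" and "\<alpha> < 1"
  shows "\<exists>C c::real. \<forall>m k::nat. 1 \<le> k \<longrightarrow> k \<le> m \<longrightarrow>
    measure (iid_unif m)
      {x \<in> space (iid_unif m).
         (\<Sum>i=1..k. 1 / (order_stat m x i) powr \<alpha>)
           \<le> 2 * 3 powr \<alpha> / (1 - \<alpha>) * real m powr \<alpha> * real k powr (1 - \<alpha>)}
    \<ge> 1 - C * (1 + ln (real k)) powr c * (1 / real k + 1 / real k powr ((1 - \<alpha>) / \<alpha>))"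
proof (intro exI allI impI)
  fix m k :: nat
  assume k1: "1 \<le> k" and km: "k \<le> m"
  define C :: real where "C = 1 + 1 / \<alpha> ^ 3"
  let ?P = "iid_unif m"
  interpret P: prob_space ?P by (rule prob_iid)
  define a where "a = ln (real k)"
  define b where "b = ln (real m)"
  have kpos: "0 < real k" and mpos: "0 < real m" using k1 km by auto
  have a0: "0 \<le> a" unfolding a_def using k1 by simp
  have ab: "a \<le> b" unfolding a_def b_def using k1 km by simp
  define s where "s = exp (a - b)"
  define r where "r = exp (a - b - a / \<alpha>)"
  define M where "M = exp (\<alpha> * b + (1 - \<alpha>) * a)"
  define B where "B = 2 * 3 powr \<alpha> / (1 - \<alpha>) * real m powr \<alpha> * real k powr (1 - \<alpha>)"
  define F where "F y = 1 / y powr \<alpha>" for y :: real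
  define g where "g y = indicator {r..s} y * F y" for y :: real
  define Y where "Y x = (\<Sum>j<m. g (x j))" for x :: "nat \<Rightarrow> real"
  define E1 where "E1 = integral\<^sup>L unif01 g"
  define E2 where "E2 = integral\<^sup>L unif01 (\<lambda>y. (g y)\<^sup>2)"
  define d where "d = \<alpha> * M"
  define Good where "Good = {x \<in> space ?P. (\<Sum>i=1..k. 1 / (order_stat m x i) powr \<alpha>) \<le> B}"
  have s_pos: "0 < s" and r_pos: "0 < r" unfolding s_def r_def by auto
  have s1: "s \<le> 1" unfolding s_def using ab by simp
  have rs: "r \<le> s" unfolding s_def r_def using a0 assms(1) by simp
  have m_exp: "real m = exp b" and k_exp: "real k = exp a" unfolding a_def b_def using kpos mpos by auto
  have s_eq: "s = real k / real m" unfolding s_def by (simp add: exp_diff m_exp k_exp)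
  have M_eq: "B = 2 * 3 powr \<alpha> / (1 - \<alpha>) * M"
  proof -
    have "real m powr \<alpha> * real k powr (1 - \<alpha>) = M"
      unfolding M_def m_exp k_exp by (simp add: powr_def exp_add[symmetric] mult.commute)
    then show ?thesis unfolding B_def by simp
  qed
  have s_pow: "s powr p = exp (p * (a - b))" for p unfolding s_def by (simp add: powr_def)
  have r_pow: "r powr p = exp (p * (a - b - a / \<alpha>))" for p unfolding r_def by (simp add: powr_def)
  have d_pos: "0 < d" unfolding d_def M_def using assms by simp
  have F_eq: "F y = y powr (- \<alpha>)" for y unfolding F_def by (simp add: powr_minus_divide)
  have g_meas[measurable]: "g \<in> borel_measurable borel" unfolding g_def F_eq by measurable
  have g_bnd: "\<bar>g y\<bar> \<le> 1 / r powr \<alpha>" for y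
  proof (cases "y \<in> {r..s}")
    case True
    then have "r powr \<alpha> \<le> y powr \<alpha>" using r_pos assms(1) by (intro powr_mono2) auto
    moreover have "0 < r powr \<alpha>" using r_pos by simp
    ultimately have "1 / y powr \<alpha> \<le> 1 / r powr \<alpha>" by (simp add: frac_le)
    then show ?thesis using True unfolding g_def F_def by simp
  next
    case False then show ?thesis unfolding g_def by simp
  qed
  have g_int: "integrable unif01 g" by (rule unif_int[OF g_meas g_bnd])
  have g2_int: "integrable unif01 (\<lambda>y. (g y)\<^sup>2)"
  proof (rule unif_int[of _ "(1 / r powr \<alpha>)^2"])
    fix y
    have "\<bar>(g y)\<^sup>2\<bar> = \<bar>g y\<bar>^2" by simp
    also have "\<dots> \<le> (1 / r powr \<alpha>)^2" by (rule power_mono[OF g_bnd]) simp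
    finally show "\<bar>(g y)\<^sup>2\<bar> \<le> (1 / r powr \<alpha>)^2" .
  qed measurable
  have E1_le: "E1 \<le> s powr (1 - \<alpha>) / (1 - \<alpha>)"
  proof -
    have der: "((\<lambda>y. y powr (1 - \<alpha>) / (1 - \<alpha>)) has_real_derivative y powr (- \<alpha>)) (at y)"
      if "y \<in> {r..s}" for y
    proof -
      have "y > 0" using that r_pos by simp
      from DERIV_cdivide[OF has_real_derivative_powr[OF this, of "1 - \<alpha>"], of "1 - \<alpha>"]
      show ?thesis using assms(2) by simp
    qed
    have cont: "continuous_on {r..s} (\<lambda>y. y powr (- \<alpha>))"
      using r_pos by (intro continuous_intros) auto
    have "E1 = integral\<^sup>L unif01 (\<lambda>y. indicator {r..s} y * y powr (- \<alpha>))"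
      unfolding E1_def g_def F_eq ..
    also have "\<dots> = s powr (1 - \<alpha>) / (1 - \<alpha>) - r powr (1 - \<alpha>) / (1 - \<alpha>)"
      by (rule unif01_FTC(1)[OF _ rs s1 der cont]) (use r_pos in auto)
    also have "\<dots> \<le> s powr (1 - \<alpha>) / (1 - \<alpha>)" using assms(2) by simp
    finally show ?thesis .
  qed
  define K where "K = s powr (1 - 2 * \<alpha>) + r powr (1 - 2 * \<alpha>)"
  have E2_le: "E2 \<le> (s powr (1 - 2 * \<alpha>) + r powr (1 - 2 * \<alpha>)) * (a / \<alpha>)"
  proof -
    have der: "((\<lambda>y. K * ln y) has_real_derivative K / y) (at y)"
      if "y \<in> {r..s}" for y
    proof -
      have "y > 0" using that r_pos by simp
      then show ?thesis by (auto intro!: derivative_eq_intros)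
    qed
    have cont: "continuous_on {r..s} (\<lambda>y. K / y)"
      using r_pos by (intro continuous_intros) auto
    have FTC: "integral\<^sup>L unif01 (\<lambda>y. indicator {r..s} y * (K / y)) = K * ln s - K * ln r"
      by (rule unif01_FTC(1)[OF _ rs s1 der cont]) (use r_pos in auto)
    have meas: "(\<lambda>y. indicator {r..s} y * (K / y)) \<in> borel_measurable borel"
      by (rule unif01_FTC(2)[OF _ rs s1 der cont]) (use r_pos in auto)
    have K0: "0 \<le> K" unfolding K_def by simp
    have int: "integrable unif01 (\<lambda>y. indicator {r..s} y * (K / y))"
    proof (rule unif_int[OF meas, of "K / r"])
      fix y show "\<bar>indicator {r..s} y * (K / y)\<bar> \<le> K / r"
        using r_pos K0 by (auto simp: indicator_def intro: divide_left_mono)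
    qed
    have pw: "(g y)\<^sup>2 \<le> indicator {r..s} y * (K / y)" for y
    proof (cases "y \<in> {r..s}")
      case True
      then have y0: "0 < y" using r_pos by simp
      have "y powr (1 - 2 * \<alpha>) \<le> K"
      proof (cases "0 \<le> 1 - 2 * \<alpha>")
        case True
        then have "y powr (1 - 2 * \<alpha>) \<le> s powr (1 - 2 * \<alpha>)"
          using \<open>y \<in> {r..s}\<close> y0 by (intro powr_mono2) auto
        then show ?thesis unfolding K_def using powr_ge_zero[of r "1 - 2 * \<alpha>"] by linarith
      next
        case False
        then have "y powr (1 - 2 * \<alpha>) \<le> r powr (1 - 2 * \<alpha>)"
          using \<open>y \<in> {r..s}\<close> r_pos by (intro powr_mono2') auto
        then show ?thesis unfolding K_def using powr_ge_zero[of s "1 - 2 * \<alpha>"] by linarith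
      qed
      moreover have "(g y)\<^sup>2 = y powr (1 - 2 * \<alpha>) / y"
      proof -
        have "y powr (1 - 2 * \<alpha>) = y powr 1 / (y powr \<alpha> * y powr \<alpha>)"
          by (simp add: powr_diff powr_add[symmetric])
        then show ?thesis using True y0 unfolding g_def F_def
          by (simp add: power2_eq_square field_simps)
      qed
      ultimately show ?thesis using True y0 by (simp add: divide_right_mono)
    next
      case False then show ?thesis unfolding g_def by simp
    qed
    have "E2 \<le> integral\<^sup>L unif01 (\<lambda>y. indicator {r..s} y * (K / y))"
      unfolding E2_def by (rule integral_mono'[OF int]) (use pw K0 in \<open>auto intro: order_trans[OF zero_le_power2]\<close>)
    also have "\<dots> = K * (ln s - ln r)" using FTC by (simp add: algebra_simps)
    also have "ln s - ln r = a / \<alpha>" unfolding s_def r_def by simp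
    finally show ?thesis unfolding K_def .
  qed
  have Pint: "integrable ?P f" if "f \<in> borel_measurable ?P" "\<And>x. \<bar>f x\<bar> \<le> Bd" for f :: "(nat \<Rightarrow> real) \<Rightarrow> real" and Bd :: real
    by (rule P.integrable_const_bound[of _ Bd]) (use that in auto)
  have Y_meas[measurable]: "Y \<in> borel_measurable ?P" unfolding Y_def iid_unif_def by measurable
  have Y_bnd: "\<bar>Y x\<bar> \<le> real m * (1 / r powr \<alpha>)" for x
  proof -
    have "\<bar>Y x\<bar> \<le> (\<Sum>j<m. \<bar>g (x j)\<bar>)" unfolding Y_def by (rule sum_abs)
    also have "\<dots> \<le> (\<Sum>j<m. 1 / r powr \<alpha>)" by (intro sum_mono g_bnd)
    finally show ?thesis by simp
  qed
  have Y_int: "integrable ?P Y" by (rule Pint[OF Y_meas Y_bnd])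
  have Y2_int: "integrable ?P (\<lambda>x. (Y x)\<^sup>2)"
  proof (rule Pint[of _ "(real m * (1 / r powr \<alpha>))^2"])
    fix x
    have "\<bar>(Y x)\<^sup>2\<bar> = \<bar>Y x\<bar>^2" by simp
    also have "\<dots> \<le> (real m * (1 / r powr \<alpha>))^2" by (rule power_mono[OF Y_bnd]) simp
    finally show "\<bar>(Y x)\<^sup>2\<bar> \<le> (real m * (1 / r powr \<alpha>))^2" .
  qed measurable
  have gj_int: "integrable ?P (\<lambda>x. g (x j))" if "j < m" for j
  proof (rule Pint[of _ "1 / r powr \<alpha>"])
    show "(\<lambda>x. g (x j)) \<in> borel_measurable ?P" by (rule iid_comp_meas[OF that g_meas])
  qed (rule g_bnd)
  have EY: "P.expectation Y = real m * E1"
  proof -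
    have "P.expectation Y = (\<Sum>j<m. integral\<^sup>L ?P (\<lambda>x. g (x j)))"
      unfolding Y_def by (rule Bochner_Integration.integral_sum) (use gj_int in auto)
    also have "\<dots> = (\<Sum>j<m. E1)"
      unfolding E1_def by (intro sum.cong refl iid_coord g_int) auto
    finally show ?thesis by simp
  qed
  define c where "c y = g y - E1" for y
  define R where "R = 1 / r powr \<alpha> + \<bar>E1\<bar>"
  have R0: "0 \<le> R" unfolding R_def by simp
  have c_meas[measurable]: "c \<in> borel_measurable borel" unfolding c_def by measurable
  have c_bnd: "\<bar>c y\<bar> \<le> R" for y unfolding c_def R_def using g_bnd[of y] by linarith
  have cc_bnd: "\<bar>c y * c y\<bar> \<le> R * R" for y
    unfolding abs_mult using R0 by (intro mult_mono c_bnd) auto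
  have c_int: "integrable unif01 c" by (rule unif_int[OF c_meas c_bnd])
  have cc_int: "integrable unif01 (\<lambda>y. c y * c y)" by (rule unif_int[OF _ cc_bnd]) measurable
  have Ec: "integral\<^sup>L unif01 c = 0"
  proof -
    have "integral\<^sup>L unif01 c = integral\<^sup>L unif01 g - integral\<^sup>L unif01 (\<lambda>_. E1)"
      unfolding c_def by (rule Bochner_Integration.integral_diff[OF g_int])
        (simp add: finite_measure.integrable_const[OF prob_space.finite_measure[OF prob_unif01]])
    also have "integral\<^sup>L unif01 (\<lambda>_. E1) = E1"
      using prob_space.prob_space[OF prob_unif01] by simp
    finally show ?thesis unfolding E1_def by simp
  qed
  have Ecc: "integral\<^sup>L unif01 (\<lambda>y. c y * c y) \<le> E2"
  proof -
    have "integral\<^sup>L unif01 (\<lambda>y. c y * c y) = prob_space.variance unif01 g"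
      unfolding c_def E1_def by (simp add: power2_eq_square)
    also have "\<dots> = E2 - E1\<^sup>2"
      unfolding E2_def E1_def by (rule prob_space.variance_eq[OF prob_unif01 g_int g2_int])
    finally show ?thesis by simp
  qed
  have cross: "integral\<^sup>L ?P (\<lambda>x. c (x j) * c (x l)) = (if j = l then integral\<^sup>L unif01 (\<lambda>y. c y * c y) else 0)"
    if "j < m" "l < m" for j l
  proof (cases "j = l")
    case True
    then show ?thesis using iid_coord[OF that(1) cc_int] by simp
  next
    case False
    then show ?thesis using iid_pair[OF that False c_int] Ec by simp
  qed
  have cjl_int: "integrable ?P (\<lambda>x. c (x j) * c (x l))" if "j < m" "l < m" for j l
  proof (rule Pint[of _ "R * R"])
    show "(\<lambda>x. c (x j) * c (x l)) \<in> borel_measurable ?P" by (intro borel_measurable_times iid_comp_meas[OF that(1) c_meas] iid_comp_meas[OF that(2) c_meas])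
  qed (use R0 in \<open>auto simp: abs_mult intro: mult_mono c_bnd\<close>)
  have sq: "(Y x - real m * E1)\<^sup>2 = (\<Sum>j<m. \<Sum>l<m. c (x j) * c (x l))" for x
  proof -
    have "Y x - real m * E1 = (\<Sum>j<m. c (x j))"
      unfolding Y_def c_def by (simp add: sum_subtractf)
    then show ?thesis by (simp add: power2_eq_square sum_product)
  qed
  have VY: "P.variance Y \<le> real m * E2"
  proof -
    have "P.variance Y = integral\<^sup>L ?P (\<lambda>x. \<Sum>j<m. \<Sum>l<m. c (x j) * c (x l))"
      unfolding EY sq ..
    also have "\<dots> = (\<Sum>j<m. \<Sum>l<m. integral\<^sup>L ?P (\<lambda>x. c (x j) * c (x l)))"
    proof -
      have "integral\<^sup>L ?P (\<lambda>x. \<Sum>j<m. \<Sum>l<m. c (x j) * c (x l)) = (\<Sum>j<m. integral\<^sup>L ?P (\<lambda>x. \<Sum>l<m. c (x j) * c (x l)))"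
        by (rule Bochner_Integration.integral_sum) (auto intro!: Bochner_Integration.integrable_sum cjl_int)
      also have "\<dots> = (\<Sum>j<m. \<Sum>l<m. integral\<^sup>L ?P (\<lambda>x. c (x j) * c (x l)))"
        by (intro sum.cong refl Bochner_Integration.integral_sum cjl_int) auto
      finally show ?thesis .
    qed
    also have "\<dots> = (\<Sum>j<m. \<Sum>l<m. (if j = l then integral\<^sup>L unif01 (\<lambda>y. c y * c y) else 0))"
      by (intro sum.cong refl cross) auto
    also have "\<dots> = real m * integral\<^sup>L unif01 (\<lambda>y. c y * c y)"
      by simp
    also have "\<dots> \<le> real m * E2" using Ecc by (intro mult_left_mono) auto
    finally show ?thesis .
  qed
  have cheb: "P.prob {x \<in> space ?P. d \<le> \<bar>Y x - real m * E1\<bar>} \<le> real m * E2 / d\<^sup>2"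
  proof -
    have "P.prob {x \<in> space ?P. d \<le> \<bar>Y x - P.expectation Y\<bar>} \<le> P.variance Y / d\<^sup>2"
      by (rule P.Chebyshev_inequality[OF Y_meas Y2_int d_pos])
    also have "\<dots> \<le> real m * E2 / d\<^sup>2"
      using VY d_pos by (simp add: divide_right_mono)
    finally show ?thesis using EY by simp
  qed
  define Bad1 where "Bad1 = (\<Union>j\<in>{..<m}. {x \<in> space ?P. x j < r})"
  have lt_sets: "{x \<in> space ?P. x j < r} \<in> P.events" if "j < m" for j
  proof -
    have "(\<lambda>x. x j) \<in> borel_measurable ?P"
      using iid_comp_meas[OF that, of "\<lambda>y. y"] by simp
    then show ?thesis by measurable
  qed
  have Bad1_sets: "Bad1 \<in> P.events" unfolding Bad1_def using lt_sets by auto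
  have bad1: "P.prob Bad1 \<le> real m * r"
  proof -
    have "P.prob Bad1 \<le> (\<Sum>j<m. P.prob {x \<in> space ?P. x j < r})"
      unfolding Bad1_def by (rule P.finite_measure_subadditive_finite) (use lt_sets in auto)
    also have "\<dots> = (\<Sum>j<m. r)"
      using r_pos rs s1 by (intro sum.cong refl iid_coord_lt) auto
    finally show ?thesis by simp
  qed
  have cheb_sets: "{x \<in> space ?P. d \<le> \<bar>Y x - real m * E1\<bar>} \<in> P.events" by measurable
  have os_sum_meas[measurable]: "(\<lambda>x. \<Sum>i=1..k. 1 / (order_stat m x i) powr \<alpha>) \<in> borel_measurable ?P"
  proof (rule borel_measurable_sum)
    fix i assume "i \<in> {1..k}"
    then have "1 \<le> i" "i \<le> m" using km by auto
    have h: "(\<lambda>y::real. 1 / y powr \<alpha>) \<in> borel_measurable borel" by measurable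
    show "(\<lambda>x. 1 / (order_stat m x i) powr \<alpha>) \<in> borel_measurable ?P"
      by (rule measurable_compose[OF order_stat_measurable[OF \<open>1 \<le> i\<close> \<open>i \<le> m\<close>] h])
  qed
  have Good_sets: "Good \<in> P.events" unfolding Good_def by measurable
  have msM: "real m * s powr (1 - \<alpha>) = M"
  proof -
    have "real m * s powr (1 - \<alpha>) = exp (b + (1 - \<alpha>) * (a - b))"
      unfolding m_exp s_pow by (simp add: exp_add[symmetric])
    also have "b + (1 - \<alpha>) * (a - b) = \<alpha> * b + (1 - \<alpha>) * a" by (simp add: algebra_simps)
    finally show ?thesis unfolding M_def .
  qed
  have ksM: "real k * (1 / s powr \<alpha>) = M"
  proof -
    have "real k * (1 / s powr \<alpha>) = exp (a - \<alpha> * (a - b))"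
      unfolding k_exp s_pow by (simp add: exp_diff)
    also have "a - \<alpha> * (a - b) = \<alpha> * b + (1 - \<alpha>) * a" by (simp add: algebra_simps)
    finally show ?thesis unfolding M_def .
  qed
  have coef: "1 / (1 - \<alpha>) + \<alpha> + 1 \<le> 2 * 3 powr \<alpha> / (1 - \<alpha>)"
  proof -
    have "1 \<le> (3::real) powr \<alpha>" using assms(1) by (intro ge_one_powr_ge_zero) auto
    then have "2 / (1 - \<alpha>) \<le> 2 * 3 powr \<alpha> / (1 - \<alpha>)" using assms(2) by (simp add: divide_right_mono)
    moreover have "1 / (1 - \<alpha>) + \<alpha> + 1 \<le> 2 / (1 - \<alpha>)"
    proof -
      have "(1 + \<alpha>) * (1 - \<alpha>) \<le> 1" by (simp add: algebra_simps)
      then have "1 + \<alpha> \<le> 1 / (1 - \<alpha>)" using assms(2) by (simp add: field_simps)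
      then show ?thesis by (simp add: add_divide_distrib[symmetric] field_simps)
    qed
    ultimately show ?thesis by linarith
  qed
  have incl: "space ?P - Good \<subseteq> Bad1 \<union> {x \<in> space ?P. d \<le> \<bar>Y x - real m * E1\<bar>}"
  proof
    fix x assume x: "x \<in> space ?P - Good"
    show "x \<in> Bad1 \<union> {x \<in> space ?P. d \<le> \<bar>Y x - real m * E1\<bar>}"
    proof (rule ccontr)
      assume "\<not> ?thesis"
      then have xr: "\<And>j. j < m \<Longrightarrow> r \<le> x j" and xY: "\<bar>Y x - real m * E1\<bar> < d"
        using x unfolding Bad1_def by (auto simp: not_less)
      have "(\<Sum>i=1..k. 1 / (order_stat m x i) powr \<alpha>)
          \<le> (\<Sum>j<m. (if x j \<le> s then 1 / x j powr \<alpha> else 0)) + real k * (1 / s powr \<alpha>)"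
        by (rule deterministic_bound[OF km s_pos]) (use assms(1) in simp)
      also have "(\<Sum>j<m. (if x j \<le> s then 1 / x j powr \<alpha> else 0)) = Y x"
        unfolding Y_def g_def F_def using xr by (intro sum.cong refl) (auto simp: indicator_def)
      also have "Y x \<le> real m * E1 + d" using xY by linarith
      also have "real m * E1 \<le> real m * (s powr (1 - \<alpha>) / (1 - \<alpha>))"
        using E1_le by (intro mult_left_mono) auto
      also have "real m * (s powr (1 - \<alpha>) / (1 - \<alpha>)) = M / (1 - \<alpha>)" using msM by simp
      finally have "(\<Sum>i=1..k. 1 / (order_stat m x i) powr \<alpha>) \<le> M / (1 - \<alpha>) + \<alpha> * M + M"
        using ksM unfolding d_def by linarith
      also have "\<dots> = (1 / (1 - \<alpha>) + \<alpha> + 1) * M" by (simp add: algebra_simps)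
      also have "\<dots> \<le> 2 * 3 powr \<alpha> / (1 - \<alpha>) * M" using coef by (intro mult_right_mono) (auto simp: M_def)
      finally have "x \<in> Good" using x unfolding Good_def M_eq by auto
      then show False using x by auto
    qed
  qed
  have fail: "P.prob (space ?P - Good) \<le> real m * r + real m * E2 / d\<^sup>2"
  proof -
    have "P.prob (space ?P - Good) \<le> P.prob (Bad1 \<union> {x \<in> space ?P. d \<le> \<bar>Y x - real m * E1\<bar>})"
      by (rule P.finite_measure_mono[OF incl]) (use Bad1_sets cheb_sets in auto)
    also have "\<dots> \<le> P.prob Bad1 + P.prob {x \<in> space ?P. d \<le> \<bar>Y x - real m * E1\<bar>}"
      by (rule measure_Un_le[OF Bad1_sets cheb_sets])
    finally show ?thesis using bad1 cheb by linarith
  qed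
  define T1 where "T1 = exp (- a)"
  define T2 where "T2 = exp (a - a / \<alpha>)"
  have T1_eq: "1 / real k = T1" unfolding T1_def k_exp by (simp add: exp_minus field_simps)
  have T2_eq: "1 / real k powr ((1 - \<alpha>) / \<alpha>) = T2"
  proof -
    have "1 / real k powr ((1 - \<alpha>) / \<alpha>) = exp (- ((1 - \<alpha>) / \<alpha> * a))"
      unfolding k_exp by (simp add: powr_def exp_minus field_simps)
    also have "- ((1 - \<alpha>) / \<alpha> * a) = a - a / \<alpha>" using assms(1) by (simp add: field_simps)
    finally show ?thesis unfolding T2_def .
  qed
  have mr: "real m * r = T2"
  proof -
    have "real m * r = exp (b + (a - b - a / \<alpha>))" unfolding m_exp r_def by (simp add: exp_add[symmetric])
    also have "b + (a - b - a / \<alpha>) = a - a / \<alpha>" by simp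
    finally show ?thesis unfolding T2_def .
  qed
  have M2: "M\<^sup>2 = exp (2 * (\<alpha> * b + (1 - \<alpha>) * a))" unfolding M_def
    by (simp add: power2_eq_square exp_add[symmetric])
  have q1: "real m * s powr (1 - 2 * \<alpha>) / M\<^sup>2 = T1"
  proof -
    have "real m * s powr (1 - 2 * \<alpha>) / M\<^sup>2 = exp (b + (1 - 2 * \<alpha>) * (a - b) - 2 * (\<alpha> * b + (1 - \<alpha>) * a))"
      unfolding M2 m_exp s_pow by (simp add: exp_add exp_diff)
    also have "b + (1 - 2 * \<alpha>) * (a - b) - 2 * (\<alpha> * b + (1 - \<alpha>) * a) = - a"
      by (simp add: algebra_simps)
    finally show ?thesis unfolding T1_def .
  qed
  have q2: "real m * r powr (1 - 2 * \<alpha>) / M\<^sup>2 = T2"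
  proof -
    have "real m * r powr (1 - 2 * \<alpha>) / M\<^sup>2 = exp (b + (1 - 2 * \<alpha>) * (a - b - a / \<alpha>) - 2 * (\<alpha> * b + (1 - \<alpha>) * a))"
      unfolding M2 m_exp r_pow by (simp add: exp_add exp_diff)
    also have "b + (1 - 2 * \<alpha>) * (a - b - a / \<alpha>) - 2 * (\<alpha> * b + (1 - \<alpha>) * a) = a - a / \<alpha>"
      using assms(1) by (simp add: field_simps)
    finally show ?thesis unfolding T2_def .
  qed
  have Mpos: "0 < M" unfolding M_def by simp
  have mE2: "real m * E2 / d\<^sup>2 \<le> (T1 + T2) * (a / \<alpha> ^ 3)"
  proof -
    have "real m * E2 / d\<^sup>2 \<le> real m * ((s powr (1 - 2 * \<alpha>) + r powr (1 - 2 * \<alpha>)) * (a / \<alpha>)) / d\<^sup>2"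
      using E2_le by (intro divide_right_mono mult_left_mono) auto
    also have "\<dots> = (real m * s powr (1 - 2 * \<alpha>) / M\<^sup>2 + real m * r powr (1 - 2 * \<alpha>) / M\<^sup>2) * (a / \<alpha> ^ 3)"
      unfolding d_def using assms(1) Mpos by (simp add: field_simps power2_eq_square power3_eq_cube)
    also have "\<dots> = (T1 + T2) * (a / \<alpha> ^ 3)" using q1 q2 by simp
    finally show ?thesis .
  qed
  have final: "real m * r + real m * E2 / d\<^sup>2
      \<le> C * (1 + ln (real k)) powr 1 * (1 / real k + 1 / real k powr ((1 - \<alpha>) / \<alpha>))"
  proof -
    have T1p: "0 < T1" and T2p: "0 < T2" unfolding T1_def T2_def by auto
    have ia: "0 < 1 / \<alpha> ^ 3" using assms(1) by simp
    have "real m * r + real m * E2 / d\<^sup>2 \<le> T2 + (T1 + T2) * (a / \<alpha> ^ 3)" using mr mE2 by simp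
    also have "\<dots> \<le> (1 + 1 / \<alpha> ^ 3) * (1 + a) * (T1 + T2)"
    proof -
      have "(1 + 1 / \<alpha> ^ 3) * (1 + a) * (T1 + T2) = (T1 + T2) + (T1 + T2) * a + (T1 + T2) * (1 / \<alpha> ^ 3) + (T1 + T2) * (a / \<alpha> ^ 3)"
        by (simp add: algebra_simps add_divide_distrib)
      moreover have "0 \<le> (T1 + T2) * a" using T1p T2p a0 by simp
      moreover have "0 \<le> (T1 + T2) * (1 / \<alpha> ^ 3)" using T1p T2p ia by simp
      ultimately show ?thesis using T1p by linarith
    qed
    also have "\<dots> = C * (1 + ln (real k)) powr 1 * (1 / real k + 1 / real k powr ((1 - \<alpha>) / \<alpha>))"
      unfolding C_def T1_eq T2_eq using a0 by (simp add: a_def)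
    finally show ?thesis .
  qed
  have "P.prob Good = 1 - P.prob (space ?P - Good)"
    using P.prob_compl[OF Good_sets] by simp
  then show "P.prob {x \<in> space ?P. (\<Sum>i=1..k. 1 / (order_stat m x i) powr \<alpha>)
           \<le> 2 * 3 powr \<alpha> / (1 - \<alpha>) * real m powr \<alpha> * real k powr (1 - \<alpha>)}
    \<ge> 1 - C * (1 + ln (real k)) powr 1 * (1 / real k + 1 / real k powr ((1 - \<alpha>) / \<alpha>))"
    using fail final unfolding Good_def B_def by linarith
qed

end
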